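(* Let $R$ be a type $(1,1)$ tensor on $E$ with $R(dt)=0$, $\widetilde{R}$ its complete lift to $J^1\tau^*$, and $P$ the canonical Poisson map on $J^1\tau^*$. Then the Magri–Morosi concomitant $\mu_{\widetilde{R},P}$ vanishes identically.
   Context: Setting: $\tau:E\to\mathbb{R}$, $\dim E=n+1$, adapted coordinates $(t,q^i)$, allowed changes $t\mapsto t$, $q\mapsto Q(t,q)$; $J^1\tau^*=T^*E/\langle dt\rangle$, coordinates $(t,q^i,p_i)$ (class of $p_idq^i$). $(1,1)$ tensors act on 1-forms by the adjoint $\langle S(Z),\sigma\rangle=\langle Z,S(\sigma)\rangle$; locally $R=R^i_j\partial_{q^i}\otimes dq^j+R^i_0\partial_{q^i}\otimes dt$. Complete lift: $\widetilde{R}=R^i_j(\partial_{q^i}\otimes dq^j+\partial_{p_j}\otimes dp_i)+R^i_0\partial_{q^i}\otimes dt+p_i(\frac{\partial R^i_j}{\partial q^k}-\frac{\partial R^i_k}{\partial q^j})\partial_{p_j}\otimes dq^k+p_i(\frac{\partial R^i_k}{\partial t}-\frac{\partial R^i_0}{\partial q^k})\partial_{p_k}\otimes dt$. Canonical Poisson structure: $\Lambda=\partial_{q^i}\wedge\partial_{p_i}$ on $J^1\tau^*$; $P$ maps 1-forms to vector fields by $\Lambda(\alpha,\beta)=\langle P(\alpha),\beta\rangle$. One has $P\circ\widetilde{R}=\widetilde{R}\circ P$. Magri–Morosi concomitant: the $(1,2)$ tensor $\mu_{\widetilde{R},P}(\sigma,Z)=(\mathcal{L}_{P(\sigma)}\widetilde{R})(Z)-P\big(\mathcal{L}_Z(\widetilde{R}(\sigma))\big)+P\big(\mathcal{L}_{\widetilde{R}(Z)}\sigma\big)$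 for 1-forms $\sigma$ and vector fields $Z$ on $J^1\tau^*$. *)

theory Defs
  imports "HOL-Analysis.Analysis"
begin

text \<open>Local adapted coordinates. A point of the chart of E is (t,q), a point of the
  induced chart of J1 tau* is (t,q,p). Tensor fields are given by their component
  functions in these coordinates.\<close>

type_synonym 'n Ept = "real \<times> (real^'n)"
type_synonym 'n Jpt = "real \<times> (real^'n) \<times> (real^'n)"

datatype 'n eidx = Te | Qe 'n
datatype 'n jidx = Tj | Qj 'n | Pj 'n

definition pd :: "('a::real_normed_vector \<Rightarrow> real) \<Rightarrow> 'a \<Rightarrow> 'a \<Rightarrow> real" where
  "pd f v x = deriv (\<lambda>s. f (x + s *\<^sub>R v)) 0"

fun Ck_on :: "nat \<Rightarrow> 'a::euclidean_space set \<Rightarrow> ('a \<Rightarrow> real) \<Rightarrow> bool" where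
  "Ck_on 0 U f = continuous_on U f"
| "Ck_on (Suc k) U f = (f differentiable_on U \<and> (\<forall>v\<in>Basis. Ck_on k U (pd f v)))"

definition smooth_on :: "'a::euclidean_space set \<Rightarrow> ('a \<Rightarrow> real) \<Rightarrow> bool" where
  "smooth_on U f = (\<forall>k. Ck_on k U f)"

fun edir :: "'n::finite eidx \<Rightarrow> 'n Ept" where
  "edir Te = (1, 0)"
| "edir (Qe i) = (0, axis i 1)"

fun jdir :: "'n::finite jidx \<Rightarrow> 'n Jpt" where
  "jdir Tj = (1, 0, 0)"
| "jdir (Qj i) = (0, axis i 1, 0)"
| "jdir (Pj i) = (0, 0, axis i 1)"

definition pdE :: "'n::finite eidx \<Rightarrow> ('n Ept \<Rightarrow> real) \<Rightarrow> 'n Ept \<Rightarrow> real" where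
  "pdE a f x = pd f (edir a) x"

definition pdJ :: "'n::finite jidx \<Rightarrow> ('n Jpt \<Rightarrow> real) \<Rightarrow> 'n Jpt \<Rightarrow> real" where
  "pdJ a f x = pd f (jdir a) x"

definition jsum :: "('n::finite jidx \<Rightarrow> real) \<Rightarrow> real" where
  "jsum g = g Tj + (\<Sum>i\<in>UNIV. g (Qj i)) + (\<Sum>i\<in>UNIV. g (Pj i))"

text \<open>Vector fields and 1-forms on J1 tau*: components (in the coordinate frame
  d/dt, d/dq^i, d/dp_i, resp. dt, dq^i, dp_i). A (1,1) tensor S: S a b is the
  coefficient of (d/dx^a) \<otimes> dx^b.\<close>
type_synonym 'n jfield = "'n jidx \<Rightarrow> 'n Jpt \<Rightarrow> real"
type_synonym 'n jtensor = "'n jidx \<Rightarrow> 'n jidx \<Rightarrow> 'n Jpt \<Rightarrow> real"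
type_synonym 'n etensor = "'n eidx \<Rightarrow> 'n eidx \<Rightarrow> 'n Ept \<Rightarrow> real"

definition apply_vf :: "'n::finite jtensor \<Rightarrow> 'n jfield \<Rightarrow> 'n jfield" where
  "apply_vf S Z a x = jsum (\<lambda>b. S a b x * Z b x)"

text \<open>Adjoint action on 1-forms: <Z, S sigma> = <S Z, sigma>.\<close>
definition apply_form :: "'n::finite jtensor \<Rightarrow> 'n jfield \<Rightarrow> 'n jfield" where
  "apply_form S \<sigma> b x = jsum (\<lambda>a. S a b x * \<sigma> a x)"

definition lie_form :: "'n::finite jfield \<Rightarrow> 'n jfield \<Rightarrow> 'n jfield" where
  "lie_form X \<sigma> a x = jsum (\<lambda>b. X b x * pdJ b (\<sigma> a) x + \<sigma> b x * pdJ a (X b) x)"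

definition lie_tensor :: "'n::finite jfield \<Rightarrow> 'n jtensor \<Rightarrow> 'n jtensor" where
  "lie_tensor X S a b x =
     jsum (\<lambda>c. X c x * pdJ c (S a b) x - S c b x * pdJ c (X a) x + S a c x * pdJ b (X c) x)"

text \<open>Canonical Poisson map P of Lambda = d/dq^i \<and> d/dp_i:
  Lambda(alpha,beta) = alpha_q beta_p - alpha_p beta_q = <P alpha, beta>.\<close>
fun Pmap :: "'n jfield \<Rightarrow> 'n jfield" where
  "Pmap \<alpha> Tj x = 0"
| "Pmap \<alpha> (Qj i) x = - \<alpha> (Pj i) x"
| "Pmap \<alpha> (Pj i) x = \<alpha> (Qj i) x"

text \<open>Complete lift of R (components R^i_j = R (Qe i) (Qe j), R^i_0 = R (Qe i) Te),
  exactly the local formula of the paper.\<close>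
fun clift :: "'n::finite etensor \<Rightarrow> 'n jtensor" where
  "clift R (Qj i) (Qj j) x = R (Qe i) (Qe j) (fst x, fst (snd x))"
| "clift R (Pj j) (Pj i) x = R (Qe i) (Qe j) (fst x, fst (snd x))"
| "clift R (Qj i) Tj x = R (Qe i) Te (fst x, fst (snd x))"
| "clift R (Pj j) (Qj k) x =
     (\<Sum>i\<in>UNIV. snd (snd x) $ i *
        (pdE (Qe k) (R (Qe i) (Qe j)) (fst x, fst (snd x))
         - pdE (Qe j) (R (Qe i) (Qe k)) (fst x, fst (snd x))))"
| "clift R (Pj k) Tj x =
     (\<Sum>i\<in>UNIV. snd (snd x) $ i *
        (pdE Te (R (Qe i) (Qe k)) (fst x, fst (snd x))
         - pdE (Qe k) (R (Qe i) Te) (fst x, fst (snd x))))"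
| "clift R _ _ x = 0"

definition magri_morosi :: "'n::finite jtensor \<Rightarrow> 'n jfield \<Rightarrow> 'n jfield \<Rightarrow> 'n jfield" where
  "magri_morosi S \<sigma> Z a x =
     apply_vf (lie_tensor (Pmap \<sigma>) S) Z a x
     - Pmap (lie_form Z (apply_form S \<sigma>)) a x
     + Pmap (lie_form (apply_vf S Z) \<sigma>) a x"

definition Jdom :: "'n::finite Ept set \<Rightarrow> 'n Jpt set" where
  "Jdom U = {x. (fst x, fst (snd x)) \<in> U}"

end

theory Submission
  imports Defs
begin


lemma line_deriv:
  fixes f :: "'a::real_normed_vector \<Rightarrow> real"
  assumes "(f has_derivative f') (at (y + s0 *\<^sub>R v))"
  shows "((\<lambda>s. f (y + s *\<^sub>R v)) has_real_derivative f' v) (at s0)"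
proof -
  have l: "((\<lambda>s. y + s *\<^sub>R v) has_derivative (\<lambda>s. s *\<^sub>R v)) (at s0)"
    by (auto intro!: derivative_eq_intros)
  have "((\<lambda>s. f (y + s *\<^sub>R v)) has_derivative (\<lambda>s. f' (s *\<^sub>R v))) (at s0)"
    using has_derivative_compose[OF l assms] by simp
  moreover have "(\<lambda>s. f' (s *\<^sub>R v)) = (\<lambda>s. f' v * s)"
    using has_derivative_bounded_linear[OF assms] linear_scale[of f']
    by (auto simp: bounded_linear.linear linear_cmul mult.commute)
  ultimately show ?thesis by (simp add: has_field_derivative_def)
qed

lemma pd_eq:
  fixes f :: "'a::real_normed_vector \<Rightarrow> real"
  assumes "(f has_derivative f') (at y)"
  shows "pd f v y = f' v"
  unfolding pd_def using line_deriv[of f f' y 0 v] assms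
  by (simp add: DERIV_imp_deriv)

lemma line_pd:
  fixes f :: "'a::real_normed_vector \<Rightarrow> real"
  assumes "f differentiable (at (y + s0 *\<^sub>R v))"
  shows "((\<lambda>s. f (y + s *\<^sub>R v)) has_real_derivative pd f v (y + s0 *\<^sub>R v)) (at s0)"
proof -
  obtain f' where "(f has_derivative f') (at (y + s0 *\<^sub>R v))" using assms
    by (auto simp: differentiable_def)
  then show ?thesis using line_deriv pd_eq by metis
qed




lemma mixed_mvt:
  fixes f :: "'a::real_normed_vector \<Rightarrow> real"
  assumes h: "0 < h"
    and sq: "\<And>a b. 0 \<le> a \<Longrightarrow> a \<le> h \<Longrightarrow> 0 \<le> b \<Longrightarrow> b \<le> h \<Longrightarrow> y + a *\<^sub>R u + b *\<^sub>R v \<in> U"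
    and d1: "\<And>z. z \<in> U \<Longrightarrow> f differentiable (at z)"
    and d2: "\<And>z. z \<in> U \<Longrightarrow> pd f u differentiable (at z)"
  shows "\<exists>a b. 0 < a \<and> a < h \<and> 0 < b \<and> b < h \<and>
    f (y + h *\<^sub>R u + h *\<^sub>R v) - f (y + h *\<^sub>R u) - f (y + h *\<^sub>R v) + f y
      = h * h * pd (pd f u) v (y + a *\<^sub>R u + b *\<^sub>R v)"
proof -
  define g where "g s = f ((y + h *\<^sub>R v) + s *\<^sub>R u) - f (y + s *\<^sub>R u)" for s
  have derg: "DERIV g s :> pd f u ((y + h *\<^sub>R v) + s *\<^sub>R u) - pd f u (y + s *\<^sub>R u)"
    if "0 \<le> s" "s \<le> h" for s
    unfolding g_def
    apply (intro DERIV_diff line_pd d1)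
    using sq[of s h] sq[of s 0] that h by (auto simp: add_ac)
  then obtain a where a: "0 < a" "a < h"
    "g h - g 0 = (h - 0) * (pd f u ((y + h *\<^sub>R v) + a *\<^sub>R u) - pd f u (y + a *\<^sub>R u))"
    using MVT2[OF h derg] by auto
  define k where "k r = pd f u ((y + a *\<^sub>R u) + r *\<^sub>R v)" for r
  have derk: "DERIV k r :> pd (pd f u) v ((y + a *\<^sub>R u) + r *\<^sub>R v)" if "0 \<le> r" "r \<le> h" for r
    unfolding k_def by (intro line_pd d2) (use sq[of a r] that a in auto)
  then obtain b where b: "0 < b" "b < h"
    "k h - k 0 = (h - 0) * pd (pd f u) v ((y + a *\<^sub>R u) + b *\<^sub>R v)"
    using MVT2[OF h derk] by auto
  have g: "g h - g 0 = f (y + h *\<^sub>R u + h *\<^sub>R v) - f (y + h *\<^sub>R u) - f (y + h *\<^sub>R v) + f y"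
    unfolding g_def by (simp add: add_ac)
  have kk: "pd f u ((y + h *\<^sub>R v) + a *\<^sub>R u) = k h" "pd f u (y + a *\<^sub>R u) = k 0"
    unfolding k_def by (simp_all add: add_ac)
  show ?thesis
    apply (rule exI[of _ a], rule exI[of _ b])
    using a b g kk by (simp add: mult.assoc)
qed

lemma abs_contra: "\<bar>r - p\<bar> < \<bar>p - q\<bar> / 2 \<Longrightarrow> \<bar>s - q\<bar> < \<bar>p - q\<bar> / 2 \<Longrightarrow> r = (s::real) \<Longrightarrow> False"
  by (simp add: abs_if split: if_splits)

lemma schwarz:
  fixes f :: "'a::real_normed_vector \<Rightarrow> real"
  assumes U: "open U" "y \<in> U"
    and d1: "\<And>z. z \<in> U \<Longrightarrow> f differentiable (at z)"
    and du: "\<And>z. z \<in> U \<Longrightarrow> pd f u differentiable (at z)"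
    and dv: "\<And>z. z \<in> U \<Longrightarrow> pd f v differentiable (at z)"
    and cu: "continuous_on U (pd (pd f u) v)"
    and cv: "continuous_on U (pd (pd f v) u)"
  shows "pd (pd f u) v y = pd (pd f v) u y"
proof (rule ccontr)
  let ?A = "pd (pd f u) v" and ?B = "pd (pd f v) u"
  assume ne: "?A y \<noteq> ?B y"
  define e where "e = \<bar>?A y - ?B y\<bar> / 2"
  have e: "e > 0" using ne by (simp add: e_def)
  obtain d0 where d0: "d0 > 0" "ball y d0 \<subseteq> U" using U openE by blast
  obtain d1 where d1': "d1 > 0" "\<forall>z\<in>U. dist z y < d1 \<longrightarrow> dist (?A z) (?A y) < e"
    using cu U(2) e unfolding continuous_on_iff by blast
  obtain d2 where d2': "d2 > 0" "\<forall>z\<in>U. dist z y < d2 \<longrightarrow> dist (?B z) (?B y) < e"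
    using cv U(2) e unfolding continuous_on_iff by blast
  define \<delta> where "\<delta> = min d0 (min d1 d2)"
  have \<delta>: "\<delta> > 0" using d0 d1' d2' by (simp add: \<delta>_def)
  define K where "K = norm u + norm v + 1"
  define h where "h = \<delta> / (2 * K)"
  have K: "K > 0" unfolding K_def using norm_ge_zero[of u] norm_ge_zero[of v] by linarith
  then have h: "h > 0" using \<delta> by (simp add: h_def)
  have hb: "h * (norm u + norm v) < \<delta>"
  proof -
    have "h * (norm u + norm v) \<le> h * (norm u + norm v + 1)" using h by simp
    also have "\<dots> = h * K" unfolding K_def ..
    also have "\<dots> = \<delta> / 2" unfolding h_def using K by (simp add: field_simps)
    finally show ?thesis using \<delta> by simp
  qed
  have close: "dist (y + a *\<^sub>R u' + b *\<^sub>R v') y < \<delta>"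
    if "0 \<le> a" "a \<le> h" "0 \<le> b" "b \<le> h" "norm u' + norm v' = norm u + norm v" for a b and u' v' :: 'a
  proof -
    have "norm (a *\<^sub>R u' + b *\<^sub>R v') \<le> a * norm u' + b * norm v'"
      using norm_triangle_ineq[of "a *\<^sub>R u'" "b *\<^sub>R v'"] that by simp
    also have "\<dots> \<le> h * norm u' + h * norm v'"
      using that by (intro add_mono mult_right_mono) auto
    also have "\<dots> = h * (norm u + norm v)" using that(5) by (simp add: distrib_left[symmetric])
    finally show ?thesis using hb by (simp add: dist_norm)
  qed
  have inU: "y + a *\<^sub>R u' + b *\<^sub>R v' \<in> U"
    if "0 \<le> a" "a \<le> h" "0 \<le> b" "b \<le> h" "norm u' + norm v' = norm u + norm v" for a b and u' v' :: 'a
    using close[OF that] d0 \<delta>_def by (auto simp: dist_commute subset_iff)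
  obtain a1 b1 where ab1: "0 < a1" "a1 < h" "0 < b1" "b1 < h"
    "f (y + h *\<^sub>R u + h *\<^sub>R v) - f (y + h *\<^sub>R u) - f (y + h *\<^sub>R v) + f y
      = h * h * ?A (y + a1 *\<^sub>R u + b1 *\<^sub>R v)"
    using mixed_mvt[OF h, of y u v U f] inU d1 du by blast
  obtain a2 b2 where ab2: "0 < a2" "a2 < h" "0 < b2" "b2 < h"
    "f (y + h *\<^sub>R v + h *\<^sub>R u) - f (y + h *\<^sub>R v) - f (y + h *\<^sub>R u) + f y
      = h * h * ?B (y + a2 *\<^sub>R v + b2 *\<^sub>R u)"
    using mixed_mvt[OF h, of y v u U f] inU[where u'=v and v'=u] d1 dv by (auto simp: add.commute)
  have "f (y + h *\<^sub>R v + h *\<^sub>R u) = f (y + h *\<^sub>R u + h *\<^sub>R v)" by (simp add: add_ac)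
  then have "h * h * ?A (y + a1 *\<^sub>R u + b1 *\<^sub>R v) = h * h * ?B (y + a2 *\<^sub>R v + b2 *\<^sub>R u)"
    using ab1(5) ab2(5) by linarith
  then have eq: "?A (y + a1 *\<^sub>R u + b1 *\<^sub>R v) = ?B (y + a2 *\<^sub>R v + b2 *\<^sub>R u)"
    using h by simp
  have c1: "dist (?A (y + a1 *\<^sub>R u + b1 *\<^sub>R v)) (?A y) < e"
    using d1'(2) inU[of a1 b1 u v] close[of a1 b1 u v] ab1 \<delta>_def by auto
  have c2: "dist (?B (y + a2 *\<^sub>R v + b2 *\<^sub>R u)) (?B y) < e"
    using d2'(2) inU[of a2 b2 v u] close[of a2 b2 v u] ab2 \<delta>_def by (auto simp: add.commute)
  show False using c1 c2 eq unfolding e_def dist_real_def by (metis abs_contra)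
qed




lemma alg:
  fixes P s :: "'i::finite \<Rightarrow> 'i \<Rightarrow> real" and ds :: "'i \<Rightarrow> 'i \<Rightarrow> 'i \<Rightarrow> real"
    and sg z :: "'i \<Rightarrow> real" and dsg dz :: "'i \<Rightarrow> 'i \<Rightarrow> real"
  assumes PS: "\<And>a e. (\<Sum>c\<in>UNIV. s a c * P c e) = (\<Sum>d\<in>UNIV. P a d * s e d)"
    and C: "\<And>b e. (\<Sum>c\<in>UNIV. P c e * ds c a b) - (\<Sum>d\<in>UNIV. P a d * ds b e d)
                 + (\<Sum>d\<in>UNIV. P a d * ds d e b) = 0"
  shows "(\<Sum>b\<in>UNIV. (\<Sum>c\<in>UNIV. (\<Sum>e\<in>UNIV. P c e * sg e) * ds c a b
              - s c b * (\<Sum>e\<in>UNIV. P a e * dsg c e) + s a c * (\<Sum>e\<in>UNIV. P c e * dsg b e)) * z b)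
     - (\<Sum>d\<in>UNIV. P a d * (\<Sum>b\<in>UNIV. z b * (\<Sum>c\<in>UNIV. s c d * dsg b c + ds b c d * sg c)
              + (\<Sum>c\<in>UNIV. s c b * sg c) * dz d b))
     + (\<Sum>d\<in>UNIV. P a d * (\<Sum>b\<in>UNIV. (\<Sum>c\<in>UNIV. s b c * z c) * dsg b d
              + sg b * (\<Sum>c\<in>UNIV. s b c * dz d c + ds d b c * z c))) = 0"
proof -
  define T1a where "T1a = (\<Sum>b\<in>UNIV. \<Sum>c\<in>UNIV. \<Sum>e\<in>UNIV. P c e * sg e * ds c a b * z b)"
  define T1b where "T1b = (\<Sum>b\<in>UNIV. \<Sum>c\<in>UNIV. \<Sum>e\<in>UNIV. s c b * P a e * dsg c e * z b)"
  define T1c where "T1c = (\<Sum>b\<in>UNIV. \<Sum>c\<in>UNIV. \<Sum>e\<in>UNIV. s a c * P c e * dsg b e * z b)"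
  define T2a where "T2a = (\<Sum>d\<in>UNIV. \<Sum>b\<in>UNIV. \<Sum>c\<in>UNIV. P a d * z b * ds b c d * sg c)"
  define T2b where "T2b = (\<Sum>d\<in>UNIV. \<Sum>b\<in>UNIV. \<Sum>c\<in>UNIV. P a d * z b * s c d * dsg b c)"
  define T2c where "T2c = (\<Sum>d\<in>UNIV. \<Sum>b\<in>UNIV. \<Sum>c\<in>UNIV. P a d * s c b * sg c * dz d b)"
  define T3a where "T3a = (\<Sum>d\<in>UNIV. \<Sum>b\<in>UNIV. \<Sum>c\<in>UNIV. P a d * s b c * z c * dsg b d)"
  define T3b where "T3b = (\<Sum>d\<in>UNIV. \<Sum>b\<in>UNIV. \<Sum>c\<in>UNIV. P a d * sg b * ds d b c * z c)"
  define T3c where "T3c = (\<Sum>d\<in>UNIV. \<Sum>b\<in>UNIV. \<Sum>c\<in>UNIV. P a d * sg b * s b c * dz d c)"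
  have expand: "?thesis \<longleftrightarrow> T1a - T1b + T1c - T2a - T2b - T2c + T3a + T3b + T3c = 0"
    unfolding T1a_def T1b_def T1c_def T2a_def T2b_def T2c_def T3a_def T3b_def T3c_def
    by (simp add: sum_distrib_left sum_distrib_right sum.distrib sum_subtractf algebra_simps)
  have c1: "T2c = T3c"
    unfolding T2c_def T3c_def
    apply (rule sum.cong[OF refl])
    apply (subst sum.swap)
    by (simp add: algebra_simps)
  have c2: "T1b = T3a"
  proof -
    have "T3a = (\<Sum>b\<in>UNIV. \<Sum>d\<in>UNIV. \<Sum>c\<in>UNIV. P a d * s b c * z c * dsg b d)"
      unfolding T3a_def by (rule sum.swap)
    also have "\<dots> = (\<Sum>b\<in>UNIV. \<Sum>c\<in>UNIV. \<Sum>d\<in>UNIV. P a d * s b c * z c * dsg b d)"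
      by (rule sum.cong[OF refl], rule sum.swap)
    also have "\<dots> = (\<Sum>c\<in>UNIV. \<Sum>b\<in>UNIV. \<Sum>d\<in>UNIV. P a d * s b c * z c * dsg b d)"
      by (rule sum.swap)
    finally show ?thesis unfolding T1b_def by (simp add: algebra_simps)
  qed
  have c3: "T1c = T2b"
  proof -
    have "T1c = (\<Sum>b\<in>UNIV. \<Sum>e\<in>UNIV. dsg b e * z b * (\<Sum>c\<in>UNIV. s a c * P c e))"
      unfolding T1c_def
      apply (rule sum.cong[OF refl])
      apply (subst sum.swap)
      by (simp add: sum_distrib_left algebra_simps)
    also have "\<dots> = (\<Sum>b\<in>UNIV. \<Sum>e\<in>UNIV. dsg b e * z b * (\<Sum>d\<in>UNIV. P a d * s e d))"
      using PS by simp
    also have "\<dots> = (\<Sum>b\<in>UNIV. \<Sum>e\<in>UNIV. \<Sum>d\<in>UNIV. P a d * z b * s e d * dsg b e)"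
      by (simp add: sum_distrib_left algebra_simps)
    also have "\<dots> = (\<Sum>b\<in>UNIV. \<Sum>d\<in>UNIV. \<Sum>e\<in>UNIV. P a d * z b * s e d * dsg b e)"
      by (rule sum.cong[OF refl], rule sum.swap)
    also have "\<dots> = T2b"
      unfolding T2b_def by (rule sum.swap)
    finally show ?thesis .
  qed
  have c4: "T1a - T2a + T3b = (\<Sum>b\<in>UNIV. \<Sum>e\<in>UNIV. sg e * z b *
      ((\<Sum>c\<in>UNIV. P c e * ds c a b) - (\<Sum>d\<in>UNIV. P a d * ds b e d) + (\<Sum>d\<in>UNIV. P a d * ds d e b)))"
  proof -
    have A: "T1a = (\<Sum>b\<in>UNIV. \<Sum>e\<in>UNIV. sg e * z b * (\<Sum>c\<in>UNIV. P c e * ds c a b))"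
      unfolding T1a_def
      apply (rule sum.cong[OF refl])
      apply (subst sum.swap)
      by (simp add: sum_distrib_left algebra_simps)
    have B: "T2a = (\<Sum>b\<in>UNIV. \<Sum>e\<in>UNIV. sg e * z b * (\<Sum>d\<in>UNIV. P a d * ds b e d))"
    proof -
      have "T2a = (\<Sum>b\<in>UNIV. \<Sum>d\<in>UNIV. \<Sum>c\<in>UNIV. P a d * z b * ds b c d * sg c)"
        unfolding T2a_def by (rule sum.swap)
      also have "\<dots> = (\<Sum>b\<in>UNIV. \<Sum>c\<in>UNIV. \<Sum>d\<in>UNIV. P a d * z b * ds b c d * sg c)"
        by (rule sum.cong[OF refl], rule sum.swap)
      finally show ?thesis by (simp add: sum_distrib_left algebra_simps)
    qed
    have Cc: "T3b = (\<Sum>b\<in>UNIV. \<Sum>e\<in>UNIV. sg e * z b * (\<Sum>d\<in>UNIV. P a d * ds d e b))"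
    proof -
      have "T3b = (\<Sum>e\<in>UNIV. \<Sum>b\<in>UNIV. \<Sum>d\<in>UNIV. P a d * sg e * ds d e b * z b)"
      proof -
        have "T3b = (\<Sum>e\<in>UNIV. \<Sum>d\<in>UNIV. \<Sum>b\<in>UNIV. P a d * sg e * ds d e b * z b)"
          unfolding T3b_def by (rule sum.swap)
        also have "\<dots> = (\<Sum>e\<in>UNIV. \<Sum>b\<in>UNIV. \<Sum>d\<in>UNIV. P a d * sg e * ds d e b * z b)"
          by (rule sum.cong[OF refl], rule sum.swap)
        finally show ?thesis .
      qed
      also have "\<dots> = (\<Sum>b\<in>UNIV. \<Sum>e\<in>UNIV. \<Sum>d\<in>UNIV. P a d * sg e * ds d e b * z b)"
        by (rule sum.swap)
      finally show ?thesis by (simp add: sum_distrib_left algebra_simps)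
    qed
    show ?thesis unfolding A B Cc
      by (simp add: sum.distrib sum_subtractf algebra_simps sum_distrib_left)
  qed
  have "T1a - T2a + T3b = 0" unfolding c4 using C by simp
  then show ?thesis unfolding expand using c1 c2 c3 by linarith
qed




instance jidx :: (finite) finite
proof
  have "(UNIV :: 'a jidx set) = insert Tj (range Qj \<union> range Pj)"
    by (auto, case_tac x, auto)
  then show "finite (UNIV :: 'a jidx set)" by (metis finite_insert finite_Un finite_imageI finite)
qed

lemma sum_UNIV_jidx:
  fixes g :: "'n::finite jidx \<Rightarrow> 'b::comm_monoid_add"
  shows "(\<Sum>a\<in>UNIV. g a) = g Tj + (\<Sum>i\<in>UNIV. g (Qj i)) + (\<Sum>i\<in>UNIV. g (Pj i))"
proof -
  have U: "(UNIV :: 'n jidx set) = insert Tj (range Qj \<union> range Pj)"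
    by (auto, case_tac x, auto)
  have "(\<Sum>a\<in>UNIV. g a) = g Tj + sum g (range Qj \<union> range Pj)"
    unfolding U by (subst sum.insert) auto
  also have "sum g (range Qj \<union> range Pj) = sum g (range Qj) + sum g (range Pj)"
    by (rule sum.union_disjoint) auto
  also have "sum g (range Qj) = (\<Sum>i\<in>UNIV. g (Qj i))"
    by (subst sum.reindex) (auto simp: inj_on_def)
  also have "sum g (range Pj) = (\<Sum>i\<in>UNIV. g (Pj i))"
    by (subst sum.reindex) (auto simp: inj_on_def)
  finally show ?thesis by (simp add: add.assoc)
qed

lemma jsum_sum: "jsum g = (\<Sum>a\<in>UNIV. g a)"
  unfolding jsum_def sum_UNIV_jidx ..

fun Pm :: "'n jidx \<Rightarrow> 'n jidx \<Rightarrow> real" where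
  "Pm (Qj i) (Pj j) = (if i = j then -1 else 0)"
| "Pm (Pj i) (Qj j) = (if i = j then 1 else 0)"
| "Pm _ _ = 0"

lemma if_mult0: "(if P then a else 0) * (c::real) = (if P then a * c else 0)"
  by simp

lemma Pmap_eta:
  fixes \<alpha> :: "'n::finite jfield"
  shows "Pmap \<alpha> a = (\<lambda>y. \<Sum>d\<in>UNIV. Pm a d * \<alpha> d y)"
  by (rule ext, cases a) (simp_all add: sum_UNIV_jidx if_mult0)

definition ld :: "('n::finite Jpt \<Rightarrow> real) \<Rightarrow> 'n Jpt \<Rightarrow> bool" where
  "ld f x \<longleftrightarrow> (\<forall>c. ((\<lambda>s. f (x + s *\<^sub>R jdir c)) has_real_derivative pdJ c f x) (at 0))"

lemma pdJ_eq: "((\<lambda>s. f (x + s *\<^sub>R jdir c)) has_real_derivative D) (at 0) \<Longrightarrow> pdJ c f x = D"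
  unfolding pdJ_def pd_def by (rule DERIV_imp_deriv)

lemma ldI: "(\<And>c. ((\<lambda>s. f (x + s *\<^sub>R jdir c)) has_real_derivative D c) (at 0)) \<Longrightarrow> ld f x"
  unfolding ld_def using pdJ_eq by metis

lemma ldD: "ld f x \<Longrightarrow> ((\<lambda>s. f (x + s *\<^sub>R jdir c)) has_real_derivative pdJ c f x) (at 0)"
  unfolding ld_def by blast

lemma DERIV_mult_ld: "ld f x \<Longrightarrow> ld g x \<Longrightarrow>
  ((\<lambda>s. f (x + s *\<^sub>R jdir c) * g (x + s *\<^sub>R jdir c)) has_real_derivative
     f x * pdJ c g x + pdJ c f x * g x) (at 0)"
  using DERIV_mult[OF ldD[of f x c] ldD[of g x c]] by (simp add: ac_simps)

lemma ld_mult[simp]: "ld f x \<Longrightarrow> ld g x \<Longrightarrow> ld (\<lambda>y. f y * g y) x"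
  by (rule ldI, rule DERIV_mult_ld)

lemma pdJ_mult[simp]: "ld f x \<Longrightarrow> ld g x \<Longrightarrow>
   pdJ c (\<lambda>y. f y * g y) x = f x * pdJ c g x + pdJ c f x * g x"
  by (rule pdJ_eq, rule DERIV_mult_ld)

lemma ld_const[simp]: "ld (\<lambda>y. k) x"
  by (rule ldI, rule DERIV_const)

lemma pdJ_const[simp]: "pdJ c (\<lambda>y. k) x = 0"
  by (rule pdJ_eq, rule DERIV_const)

lemma DERIV_sum_ld: "(\<And>b. ld (F b) x) \<Longrightarrow>
  ((\<lambda>s. \<Sum>b\<in>A. F b (x + s *\<^sub>R jdir c)) has_real_derivative (\<Sum>b\<in>A. pdJ c (F b) x)) (at 0)"
  by (rule DERIV_sum, rule ldD)

lemma ld_sum[simp]: "(\<And>b. ld (F b) x) \<Longrightarrow> ld (\<lambda>y. \<Sum>b\<in>A. F b y) x"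
  by (rule ldI, rule DERIV_sum_ld)

lemma pdJ_sum[simp]: "(\<And>b. ld (F b) x) \<Longrightarrow> pdJ c (\<lambda>y. \<Sum>b\<in>A. F b y) x = (\<Sum>b\<in>A. pdJ c (F b) x)"
  by (rule pdJ_eq, rule DERIV_sum_ld)

lemma apply_form_eta: "apply_form S \<sigma> b = (\<lambda>y. \<Sum>a\<in>UNIV. S a b y * \<sigma> a y)"
  by (rule ext) (simp add: apply_form_def jsum_sum)

lemma apply_vf_eta: "apply_vf S Z a = (\<lambda>y. \<Sum>b\<in>UNIV. S a b y * Z b y)"
  by (rule ext) (simp add: apply_vf_def jsum_sum)

lemma magri_general:
  fixes S :: "'n::finite jtensor"
  assumes lS: "\<And>a b. ld (S a b) x" and l\<sigma>: "\<And>a. ld (\<sigma> a) x" and lZ: "\<And>a. ld (Z a) x"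
    and PS: "\<And>a e. (\<Sum>c\<in>UNIV. S a c x * Pm c e) = (\<Sum>d\<in>UNIV. Pm a d * S e d x)"
    and C: "\<And>b e. (\<Sum>c\<in>UNIV. Pm c e * pdJ c (S a b) x) - (\<Sum>d\<in>UNIV. Pm a d * pdJ b (S e d) x)
                 + (\<Sum>d\<in>UNIV. Pm a d * pdJ d (S e b) x) = 0"
  shows "magri_morosi S \<sigma> Z a x = 0"
proof -
  note A = alg[where P=Pm and s="\<lambda>a b. S a b x" and ds="\<lambda>c a b. pdJ c (S a b) x"
      and sg="\<lambda>e. \<sigma> e x" and dsg="\<lambda>c e. pdJ c (\<sigma> e) x" and z="\<lambda>b. Z b x"
      and dz="\<lambda>c b. pdJ c (Z b) x" and a=a, OF PS C]
  show ?thesis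
    unfolding magri_morosi_def Pmap_eta
    apply (simp add: apply_vf_def lie_tensor_def lie_form_def jsum_sum apply_form_eta
       apply_vf_eta lS l\<sigma> lZ)
    using A by simp
qed




definition pr :: "'n Jpt \<Rightarrow> 'n Ept" where "pr x = (fst x, fst (snd x))"

fun ev :: "'n::finite jidx \<Rightarrow> 'n Ept" where
  "ev Tj = edir Te" | "ev (Qj i) = edir (Qe i)" | "ev (Pj i) = 0"

lemma pr_line: "pr (x + s *\<^sub>R jdir c) = pr x + s *\<^sub>R ev c"
  by (cases c) (auto simp: pr_def)

lemma DERIV_comp_pr:
  assumes "f differentiable (at (pr x))"
  shows "((\<lambda>s. f (pr (x + s *\<^sub>R jdir c))) has_real_derivative pd f (ev c) (pr x)) (at 0)"
  using line_pd[of f "pr x" 0 "ev c"] assms unfolding pr_line by simp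

lemma ld_comp: "f differentiable (at (pr x)) \<Longrightarrow> ld (\<lambda>x. f (pr x)) x"
  by (rule ldI, rule DERIV_comp_pr)

lemma pdJ_comp: "f differentiable (at (pr x)) \<Longrightarrow> pdJ c (\<lambda>x. f (pr x)) x = pd f (ev c) (pr x)"
  by (rule pdJ_eq, rule DERIV_comp_pr)

lemma pd_zero: "pd f 0 y = 0"
  unfolding pd_def by (simp add: DERIV_imp_deriv)

lemma pd_diff:
  assumes "f differentiable (at y)" "g differentiable (at y)"
  shows "pd (\<lambda>y. f y - g y) v y = pd f v y - pd g v y"
proof -
  obtain f' g' where "(f has_derivative f') (at y)" "(g has_derivative g') (at y)"
    using assms by (auto simp: differentiable_def)
  then show ?thesis
    using pd_eq[of f f' y v] pd_eq[of g g' y v] pd_eq[OF has_derivative_diff, of f f' y g g' v]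
    by simp
qed

lemma DERIV_p: "((\<lambda>s. snd (snd (x + s *\<^sub>R jdir c)) $ i) has_real_derivative (snd (snd (jdir c)) $ i)) (at 0)"
proof -
  have "(\<lambda>s. snd (snd (x + s *\<^sub>R jdir c)) $ i) = (\<lambda>s. snd (snd x) $ i + s * (snd (snd (jdir c)) $ i))"
    by auto
  then show ?thesis by (auto intro!: derivative_eq_intros)
qed

lemma ld_p: "ld (\<lambda>x. snd (snd x) $ i) x"
  by (rule ldI, rule DERIV_p)

lemma pdJ_p: "pdJ c (\<lambda>x. snd (snd x) $ i) x = snd (snd (jdir c)) $ i"
  by (rule pdJ_eq, rule DERIV_p)

definition AF :: "'n::finite etensor \<Rightarrow> 'n \<Rightarrow> 'n \<Rightarrow> 'n \<Rightarrow> 'n Ept \<Rightarrow> real" where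
  "AF R j k i = (\<lambda>y. pdE (Qe k) (R (Qe i) (Qe j)) y - pdE (Qe j) (R (Qe i) (Qe k)) y)"
definition BF :: "'n::finite etensor \<Rightarrow> 'n \<Rightarrow> 'n \<Rightarrow> 'n Ept \<Rightarrow> real" where
  "BF R k i = (\<lambda>y. pdE Te (R (Qe i) (Qe k)) y - pdE (Qe k) (R (Qe i) Te) y)"

lemma clift_eta:
  "clift R (Qj i) (Qj j) = (\<lambda>x. R (Qe i) (Qe j) (pr x))"
  "clift R (Pj j) (Pj i) = (\<lambda>x. R (Qe i) (Qe j) (pr x))"
  "clift R (Qj i) Tj = (\<lambda>x. R (Qe i) Te (pr x))"
  "clift R (Pj j) (Qj k) = (\<lambda>x. \<Sum>i\<in>UNIV. snd (snd x) $ i * AF R j k i (pr x))"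
  "clift R (Pj k) Tj = (\<lambda>x. \<Sum>i\<in>UNIV. snd (snd x) $ i * BF R k i (pr x))"
  "clift R Tj b = (\<lambda>x. 0)"
  "clift R (Qj i) (Pj j) = (\<lambda>x. 0)"
  by (auto simp: pr_def AF_def BF_def)

lemma axis1_nth: "axis m (1::real) $ i = (if i = m then 1 else 0)"
  by (simp add: axis_def)

lemma pdJ_p': "pdJ Tj (\<lambda>x. snd (snd x) $ i) x = 0" "pdJ (Qj m) (\<lambda>x. snd (snd x) $ i) x = 0"
  "pdJ (Pj m) (\<lambda>x. snd (snd x) $ i) x = (if i = m then 1 else 0)"
  by (simp_all add: pdJ_p axis1_nth)

lemma pd_ev: "pd f (ev Tj) y = pdE Te f y" "pd f (ev (Qj i)) y = pdE (Qe i) f y" "pd f (ev (Pj i)) y = 0"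
  by (simp_all add: pdE_def pd_zero)

lemma mult_if0: "(c::real) * (if P then a else 0) = (if P then c * a else 0)"
  by simp

lemma pd_edir1: "pd f (1, 0) y = pdE Te f y" and pd_edir2: "pd f (0, axis i 1) y = pdE (Qe i) f y"
  by (simp_all add: pdE_def)

lemma AF_val: "AF R j k i y = pdE (Qe k) (R (Qe i) (Qe j)) y - pdE (Qe j) (R (Qe i) (Qe k)) y"
  by (simp add: AF_def)
lemma BF_val: "BF R k i y = pdE Te (R (Qe i) (Qe k)) y - pdE (Qe k) (R (Qe i) Te) y"
  by (simp add: BF_def)

context
  fixes R :: "'n::finite etensor" and x :: "'n Jpt"
  assumes dR: "\<And>a b. R a b differentiable (at (pr x))"
    and dR1: "\<And>a b c. pdE c (R a b) differentiable (at (pr x))"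
    and sym: "\<And>a b c d. pdE c (pdE d (R a b)) (pr x) = pdE d (pdE c (R a b)) (pr x)"
begin

lemma dAF: "AF R j k i differentiable (at (pr x))"
  unfolding AF_def using dR1 by (intro differentiable_diff)

lemma dBF: "BF R k i differentiable (at (pr x))"
  unfolding BF_def using dR1 by (intro differentiable_diff)

lemma ld_clift: "ld (clift R a b) x"
proof (cases a)
  case Tj then show ?thesis by (simp add: clift_eta)
next
  case (Qj i) then show ?thesis
    by (cases b) (simp_all add: clift_eta ld_comp dR)
next
  case (Pj j) then show ?thesis
    by (cases b) (simp_all add: clift_eta ld_comp dR dAF dBF ld_p)
qed

lemma pd_AF: "pd (AF R j k i) v (pr x) = pd (pdE (Qe k) (R (Qe i) (Qe j))) v (pr x) - pd (pdE (Qe j) (R (Qe i) (Qe k))) v (pr x)"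
  unfolding AF_def by (rule pd_diff; rule dR1)

lemma pd_BF: "pd (BF R k i) v (pr x) = pd (pdE Te (R (Qe i) (Qe k))) v (pr x) - pd (pdE (Qe k) (R (Qe i) Te)) v (pr x)"
  unfolding BF_def by (rule pd_diff; rule dR1)

lemma pdE_AF: "pdE c (AF R j k i) (pr x) = pdE c (pdE (Qe k) (R (Qe i) (Qe j))) (pr x) - pdE c (pdE (Qe j) (R (Qe i) (Qe k))) (pr x)"
  using pd_AF[of j k i "edir c"] by (simp add: pdE_def)
lemma pdE_BF: "pdE c (BF R k i) (pr x) = pdE c (pdE Te (R (Qe i) (Qe k))) (pr x) - pdE c (pdE (Qe k) (R (Qe i) Te)) (pr x)"
  using pd_BF[of k i "edir c"] by (simp add: pdE_def)

lemmas dsimps = clift_eta pdJ_comp dR dAF dBF ld_p ld_comp pdJ_p' pd_AF pd_BF pd_ev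
   sum_UNIV_jidx Pm.simps if_mult0 mult_if0 pd_zero pd_edir1 pd_edir2
lemmas dsimps2 = pdE_AF pdE_BF AF_val BF_val sym sum_subtractf right_diff_distrib sum.distrib

lemma PS_clift: "(\<Sum>c\<in>UNIV. clift R a c x * Pm c e) = (\<Sum>d\<in>UNIV. Pm a d * clift R e d x)"
  apply (cases a; cases e)
  apply (simp_all add: sum_UNIV_jidx if_mult0 mult_if0 AF_def pr_def sum_subtractf right_diff_distrib)
  done

lemma C_clift: "(\<Sum>c\<in>UNIV. Pm c e * pdJ c (clift R a b) x) - (\<Sum>d\<in>UNIV. Pm a d * pdJ b (clift R e d) x)
                 + (\<Sum>d\<in>UNIV. Pm a d * pdJ d (clift R e b) x) = 0"
  apply (cases a; cases b; cases e)
  apply (simp_all add: dsimps)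
  apply (simp_all add: dsimps2)
  done

end



lemma edir_Basis: "edir a \<in> (Basis :: 'n::finite Ept set)"
  by (cases a) (auto simp: Basis_prod_def Basis_vec_def)

lemma smooth_diff: "smooth_on U f \<Longrightarrow> open U \<Longrightarrow> y \<in> U \<Longrightarrow> f differentiable (at y)"
  unfolding smooth_on_def
  using differentiable_on_eq_differentiable_at by (metis Ck_on.simps(2))

lemma smooth_pd: "smooth_on U f \<Longrightarrow> v \<in> Basis \<Longrightarrow> smooth_on U (pd f v)"
  unfolding smooth_on_def by (metis Ck_on.simps(2))

lemma smooth_cont: "smooth_on U f \<Longrightarrow> continuous_on U f"
  unfolding smooth_on_def by (metis Ck_on.simps(1))

theorem proposition7:
  fixes R :: "'n::finite etensor" and U :: "'n Ept set"
    and \<sigma> Z :: "'n jfield"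
  assumes "open U"
    and "\<forall>a b. smooth_on U (R a b)"
    and "\<forall>b x. x \<in> U \<longrightarrow> R Te b x = 0"
    and "\<forall>a. smooth_on (Jdom U) (\<sigma> a)"
    and "\<forall>a. smooth_on (Jdom U) (Z a)"
  shows "\<forall>a. \<forall>x\<in>Jdom U. magri_morosi (clift R) \<sigma> Z a x = 0"
proof (intro allI ballI)
  fix a and x :: "'n Jpt"
  assume x: "x \<in> Jdom U"
  have y: "pr x \<in> U" using x by (simp add: Jdom_def pr_def)
  have oJ: "open (Jdom U)"
  proof -
    have "Jdom U = (\<lambda>x. (fst x, fst (snd x))) -` U" by (auto simp: Jdom_def)
    moreover have "continuous_on UNIV (\<lambda>x::'n Jpt. (fst x, fst (snd x)))"
      by (intro continuous_intros)
    ultimately show ?thesis using open_vimage[OF assms(1)] by simp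
  qed
  have sR: "\<And>a b. smooth_on U (R a b)" using assms(2) by blast
  have dR: "\<And>a b. R a b differentiable (at (pr x))"
    using smooth_diff[OF sR assms(1) y] .
  have dR1: "\<And>a b c. pdE c (R a b) differentiable (at (pr x))"
    unfolding pdE_def using smooth_diff[OF smooth_pd[OF sR edir_Basis] assms(1) y] .
  have sym: "\<And>a b c d. pdE c (pdE d (R a b)) (pr x) = pdE d (pdE c (R a b)) (pr x)"
  proof -
    fix a b c d
    show "pdE c (pdE d (R a b)) (pr x) = pdE d (pdE c (R a b)) (pr x)"
      unfolding pdE_def
      apply (rule schwarz[OF assms(1) y])
      using smooth_diff[OF sR[of a b] assms(1)] smooth_diff[OF smooth_pd[OF sR[of a b] edir_Basis] assms(1)]
        smooth_cont[OF smooth_pd[OF smooth_pd[OF sR[of a b] edir_Basis] edir_Basis]]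
      by blast+
  qed
  have ldf: "ld f x" if "smooth_on (Jdom U) f" for f
  proof (rule ldI)
    fix c
    have "f differentiable (at (x + 0 *\<^sub>R jdir c))" using smooth_diff[OF that oJ x] by simp
    from line_pd[OF this] show "((\<lambda>s. f (x + s *\<^sub>R jdir c)) has_real_derivative pd f (jdir c) x) (at 0)"
      by simp
  qed
  show "magri_morosi (clift R) \<sigma> Z a x = 0"
    apply (rule magri_general)
    using ld_clift[OF dR dR1 sym] ldf assms(4,5) PS_clift[OF dR dR1 sym] C_clift[OF dR dR1 sym]
    by auto
qed


end
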